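(* Let $(p,\mathcal D,L)$ be a Hadamard triple on $\mathbb R$ with $p>1$, $0\in\mathcal D\subset\{0,1,2,\dots\}$ and $0\in L\subset\{0,1,\dots,p-1\}$. Then $(p,\mathcal D)$ satisfies DPC if and only if $p>\#\mathcal D$.
   Context: A Hadamard triple on $\mathbb R$ is a triple $(p,\mathcal D,L)$ with $p>1$ an integer, $\mathcal D,L\subset\mathbb Z$ finite with $\#\mathcal D=\#L$, such that $\frac{1}{\sqrt{\#\mathcal D}}\big[e^{2\pi i d\ell/p}\big]_{\ell\in L,d\in\mathcal D}$ is unitary. For finite $A\subset\mathbb R$, $\widehat{\delta_{cA}}(\xi)=\frac1{\#A}\sum_{a\in A}e^{2\pi i ca\xi}$. $T_{p,D}$ denotes the set of $\xi\in[0,1)$ for which there exist distinct $\ell_1,\ell_2\in\{0,\dots,p-1\}$ with $\widehat{\delta_{p^{-1}D}}(\xi+\ell_i)\ne0$, $i=1,2$; $(p,D)$ satisfies the Double Points Condition (DPC) if $T_{p,D}=[0,1)$. *)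

theory Defs
  imports "HOL-Analysis.Analysis"
begin

definition hmat_entry :: "int \<Rightarrow> int \<Rightarrow> int \<Rightarrow> complex" where
  "hmat_entry p l d = cis (2 * pi * real_of_int d * real_of_int l / real_of_int p)"

text \<open>Hadamard triple: p > 1, D, L finite subsets of Z, #D = #L, and the matrix
  M = (1/sqrt #D) [e^{2 pi i d l / p}]_{l in L, d in D} is unitary, i.e.
  M M^* = I (indexed by L) and M^* M = I (indexed by D), written out entrywise.\<close>
definition hadamard_triple :: "int \<Rightarrow> int set \<Rightarrow> int set \<Rightarrow> bool" where
  "hadamard_triple p D L \<longleftrightarrow>
     p > 1 \<and> finite D \<and> finite L \<and> card D = card L \<and>
     (\<forall>l1\<in>L. \<forall>l2\<in>L.
        (\<Sum>d\<in>D. (hmat_entry p l1 d / sqrt (real (card D))) *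
                  cnj (hmat_entry p l2 d / sqrt (real (card D))))
        = (if l1 = l2 then 1 else 0)) \<and>
     (\<forall>d1\<in>D. \<forall>d2\<in>D.
        (\<Sum>l\<in>L. cnj (hmat_entry p l d1 / sqrt (real (card D))) *
                  (hmat_entry p l d2 / sqrt (real (card D))))
        = (if d1 = d2 then 1 else 0))"

text \<open>Fourier transform of the uniform discrete measure on cA:
  (1/#A) sum_{a in A} e^{2 pi i c a xi}.\<close>
definition delta_hat :: "real \<Rightarrow> int set \<Rightarrow> real \<Rightarrow> complex" where
  "delta_hat c A \<xi> = (1 / of_nat (card A)) * (\<Sum>a\<in>A. cis (2 * pi * c * real_of_int a * \<xi>))"

definition T_set :: "int \<Rightarrow> int set \<Rightarrow> real set" where
  "T_set p D = {\<xi> \<in> {0..<1}. \<exists>l1 l2. l1 \<in> {0..p-1} \<and> l2 \<in> {0..p-1} \<and> l1 \<noteq> l2 \<and>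
      delta_hat (1 / real_of_int p) D (\<xi> + real_of_int l1) \<noteq> 0 \<and>
      delta_hat (1 / real_of_int p) D (\<xi> + real_of_int l2) \<noteq> 0}"

definition DPC :: "int \<Rightarrow> int set \<Rightarrow> bool" where
  "DPC p D \<longleftrightarrow> T_set p D = {0..<1}"

end

theory Submission
  imports Defs
begin

lemma range_int: "(p::int) > 0 \<Longrightarrow> {0..p-1} = int ` {..<nat p}"
proof -
  assume "p > 0"
  have "int ` {..<nat p} = {0..<p}" using \<open>p>0\<close> by (simp add: lessThan_atLeast0 image_int_atLeastLessThan)
  moreover have "{0..<p} = {0..p-1}" by auto
  ultimately show ?thesis by simp
qed

lemma cis_eq_1_iff: "cis a = 1 \<longleftrightarrow> (\<exists>n::int. a = of_int n * (2 * pi))"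
proof
  assume "cis a = 1"
  then have "cos a = 1" by (metis complex.sel(1) cis.sel(1) one_complex.sel(1))
  then show "\<exists>n::int. a = of_int n * (2 * pi)" by (auto simp: cos_one_2pi_int)
next
  assume "\<exists>n::int. a = of_int n * (2 * pi)"
  then obtain n::int where n: "a = of_int n * (2*pi)" by blast
  have "cis a = cis (2*pi* of_int n)" using n by (simp add: algebra_simps)
  also have "\<dots> = 1" by (rule cis_multiple_2pi) simp
  finally show "cis a = 1" .
qed

lemma root_sum:
  fixes p k :: int assumes "p > 0"
  shows "(\<Sum>l\<in>{0..p-1}. cis (2*pi*real_of_int k*real_of_int l/real_of_int p))
         = (if p dvd k then of_int p else 0)"
proof -
  define z where "z = cis (2*pi*real_of_int k/real_of_int p)"
  have "(\<Sum>l\<in>{0..p-1}. cis (2*pi*real_of_int k*real_of_int l/real_of_int p))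
       = (\<Sum>j\<in>{..<nat p}. cis (2*pi*real_of_int k*real_of_int (int j)/real_of_int p))"
    using assms by (simp add: range_int sum.reindex)
  also have "\<dots> = (\<Sum>j\<in>{..<nat p}. z ^ j)"
  proof (intro sum.cong refl)
    fix j assume "j \<in> {..<nat p}"
    have "z ^ j = cis (real j * (2*pi*real_of_int k/real_of_int p))" by (simp add: z_def Complex.DeMoivre)
    also have "real j * (2*pi*real_of_int k/real_of_int p) = 2*pi*real_of_int k*real_of_int (int j)/real_of_int p"
      by simp
    finally show "cis (2*pi*real_of_int k*real_of_int (int j)/real_of_int p) = z ^ j" by simp
  qed
  finally have S: "(\<Sum>l\<in>{0..p-1}. cis (2*pi*real_of_int k*real_of_int l/real_of_int p)) = (\<Sum>j\<in>{..<nat p}. z ^ j)" .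
  show ?thesis
  proof (cases "p dvd k")
    case True
    then obtain m where m: "k = p * m" by blast
    have "z = 1" unfolding z_def using assms m
      by (simp add: cis_eq_1_iff)
    then show ?thesis using S True assms by simp
  next
    case False
    have zn: "z ^ nat p = 1" unfolding z_def Complex.DeMoivre using assms
      by (simp add: cis_eq_1_iff)
    have "z \<noteq> 1"
    proof
      assume "z = 1"
      then obtain n where n: "2*pi*real_of_int k/real_of_int p = of_int n * (2*pi)"
        unfolding z_def cis_eq_1_iff by blast
      then have "real_of_int k = real_of_int n * real_of_int p" using assms
        by (simp add: field_simps)
      then have "k = n * p" by (metis of_int_eq_iff of_int_mult)
      then show False using False by simp
    qed
    then show ?thesis using S False zn by (simp add: sum_gp_strict)
  qed
qed


lemma sq_div:
  fixes a b :: complex and s :: real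
  shows "cnj (a / complex_of_real s) * (b / complex_of_real s) = cnj a * b / complex_of_real (s * s)"
    and "(a / complex_of_real s) * cnj (b / complex_of_real s) = a * cnj b / complex_of_real (s * s)"
  by (simp_all add: field_simps)

lemma sqrt_sq_c[simp]: "complex_of_real (sqrt (real n)) * complex_of_real (sqrt (real n)) = of_nat n"
proof -
  have e: "sqrt (real n) * sqrt (real n) = real n" by simp
  have "complex_of_real (sqrt (real n)) * complex_of_real (sqrt (real n)) = complex_of_real (real n)"
    by (simp only: of_real_mult[symmetric] e)
  then show ?thesis by simp
qed

lemma cis_shift_int: "cis (x + 2*pi*real_of_int n) = cis x"
proof -
  have c1: "cis (2*pi*real_of_int n) = 1" by (rule cis_multiple_2pi) simp
  have "cis (x + 2*pi*real_of_int n) = cis x * cis (2*pi*real_of_int n)" by (simp only: cis_mult)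
  also have "\<dots> = cis x" by (simp only: c1 mult_1_right)
  finally show ?thesis .
qed

lemma hd_res:
  assumes H: "hadamard_triple p D L" and d1: "d1 \<in> D" and d2: "d2 \<in> D"
    and dv: "p dvd (d1 - d2)" and D0: "card D > 0"
  shows "d1 = d2"
proof (rule ccontr)
  assume ne: "d1 \<noteq> d2"
  from H have fin: "finite L" and cL: "card L = card D" and p1: "p > 1" unfolding hadamard_triple_def by auto
  from H d1 d2 ne have S: "(\<Sum>l\<in>L. cnj (hmat_entry p l d1 / sqrt (real (card D))) *
                  (hmat_entry p l d2 / sqrt (real (card D)))) = 0"
    unfolding hadamard_triple_def by auto
  obtain m where m: "d1 - d2 = p * m" using dv by blast
  have trm: "cnj (hmat_entry p l d1 / sqrt (real (card D))) *
                  (hmat_entry p l d2 / sqrt (real (card D))) = 1 / of_nat (card D)" for l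
  proof -
    have "hmat_entry p l d1 = hmat_entry p l d2"
    proof -
      have "2 * pi * real_of_int d1 * real_of_int l / real_of_int p
          = 2 * pi * real_of_int d2 * real_of_int l / real_of_int p + 2*pi*real_of_int (m*l)"
      proof -
        have "real_of_int d1 = real_of_int d2 + real_of_int p * real_of_int m"
          using m by (metis add_diff_cancel_left' diff_add_cancel of_int_add of_int_mult)
        then show ?thesis using p1 by (simp add: field_simps)
      qed
      then show ?thesis unfolding hmat_entry_def by (simp only: cis_shift_int)
    qed
    then have "cnj (hmat_entry p l d1) * hmat_entry p l d2 = 1"
      unfolding hmat_entry_def by (simp add: cis_cnj cis_mult)
    then show ?thesis by (simp add: sq_div D0)
  qed
  have "(\<Sum>l\<in>L. cnj (hmat_entry p l d1 / sqrt (real (card D))) *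
                  (hmat_entry p l d2 / sqrt (real (card D)))) = (\<Sum>l\<in>L. 1 / of_nat (card D))"
    by (rule sum.cong[OF refl trm])
  also have "\<dots> = of_nat (card L) / of_nat (card D)" by simp
  also have "\<dots> = 1" using cL D0 by simp
  finally show False using S by simp
qed

theorem lemma3p2:
  fixes p :: int and D L :: "int set"
  assumes "hadamard_triple p D L"
    and "p > 1"
    and "0 \<in> D" and "D \<subseteq> {0..}"
    and "0 \<in> L" and "L \<subseteq> {0..p-1}"
  shows "DPC p D \<longleftrightarrow> p > int (card D)"
proof -
  note H = assms(1)
  from H have finD: "finite D" and finL: "finite L" and cL: "card L = card D"
    unfolding hadamard_triple_def by auto
  define N where "N = card D"
  have N0: "N > 0" unfolding N_def using finD assms(3) card_gt_0_iff by blast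
  show ?thesis
  proof
    assume dpc: "DPC p D"
    show "p > int (card D)"
    proof (rule ccontr)
      assume "\<not> p > int (card D)"
      then have le: "nat p \<le> card L" using cL by simp
      have cR: "card {0..p-1} = nat p" by simp
      have "card L \<le> nat p" using card_mono[OF _ assms(6)] cR by simp
      then have "card L = card {0..p-1}" using le cR by simp
      then have Lall: "L = {0..p-1}" using card_subset_eq[OF _ assms(6)] by simp
      have zero: "delta_hat (1 / real_of_int p) D (0 + real_of_int l) = 0"
        if l: "l \<in> {0..p-1}" "l \<noteq> 0" for l
      proof -
        have HL: "\<forall>l1\<in>L. \<forall>l2\<in>L. (\<Sum>d\<in>D. (hmat_entry p l1 d / sqrt (real (card D))) *
                  cnj (hmat_entry p l2 d / sqrt (real (card D)))) = (if l1 = l2 then 1 else 0)"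
          using H unfolding hadamard_triple_def by blast
        have lL: "l \<in> L" using l Lall by simp
        have "(\<Sum>d\<in>D. (hmat_entry p l d / sqrt (real (card D))) *
                  cnj (hmat_entry p 0 d / sqrt (real (card D)))) = (if l = 0 then 1 else 0)"
          using HL lL assms(5) by blast
        then have S: "(\<Sum>d\<in>D. (hmat_entry p l d / sqrt (real (card D))) *
                  cnj (hmat_entry p 0 d / sqrt (real (card D)))) = 0" using l by simp
        have "(\<Sum>d\<in>D. (hmat_entry p l d / sqrt (real (card D))) *
                  cnj (hmat_entry p 0 d / sqrt (real (card D))))
            = (\<Sum>d\<in>D. hmat_entry p l d) / of_nat N"
          by (simp add: sq_div hmat_entry_def sum_divide_distrib N_def)
        then have S2: "(\<Sum>d\<in>D. hmat_entry p l d) = 0" using S N0 by simp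
        have "delta_hat (1 / real_of_int p) D (0 + real_of_int l) = (1 / of_nat N) * (\<Sum>d\<in>D. hmat_entry p l d)"
          unfolding delta_hat_def hmat_entry_def N_def
          by (intro arg_cong2[where f="(*)"] refl sum.cong) (simp_all add: field_simps)
        then show ?thesis using S2 by simp
      qed
      have "(0::real) \<in> T_set p D" using dpc unfolding DPC_def by simp
      then obtain l1 l2 where "l1 \<in> {0..p-1}" "l2 \<in> {0..p-1}" "l1 \<noteq> l2"
        "delta_hat (1 / real_of_int p) D (0 + real_of_int l1) \<noteq> 0"
        "delta_hat (1 / real_of_int p) D (0 + real_of_int l2) \<noteq> 0"
        unfolding T_set_def by blast
      then show False using zero by metis
    qed
  next
    assume pN: "p > int (card D)"
    have p0: "p > 0" using assms(2) by simp
    show "DPC p D" unfolding DPC_def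
    proof
      show "T_set p D \<subseteq> {0..<1}" unfolding T_set_def by blast
    next
      show "{0..<1} \<subseteq> T_set p D"
      proof
        fix \<xi> :: real assume xi: "\<xi> \<in> {0..<1}"
        define A where "A l = (\<Sum>d\<in>D. cis (2 * pi * (1 / real_of_int p) * real_of_int d * (\<xi> + real_of_int l)))" for l :: int
        have dA: "delta_hat (1 / real_of_int p) D (\<xi> + real_of_int l) = (1 / of_nat N) * A l" for l
          unfolding delta_hat_def A_def N_def by simp
        have dA0: "delta_hat (1 / real_of_int p) D (\<xi> + real_of_int l) \<noteq> 0 \<longleftrightarrow> A l \<noteq> 0" for l
          using dA N0 by simp
        have prod: "A l * cnj (A l) = (\<Sum>d\<in>D. \<Sum>d'\<in>D.
            cis (2*pi*real_of_int (d - d')*\<xi>/real_of_int p) *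
            cis (2*pi*real_of_int (d - d')*real_of_int l/real_of_int p))" for l
        proof -
          have "A l * cnj (A l) = (\<Sum>d\<in>D. \<Sum>d'\<in>D.
             cis (2 * pi * (1 / real_of_int p) * real_of_int d * (\<xi> + real_of_int l)) *
             cnj (cis (2 * pi * (1 / real_of_int p) * real_of_int d' * (\<xi> + real_of_int l))))"
            unfolding A_def cnj_sum by (simp add: sum_product)
          also have "\<dots> = (\<Sum>d\<in>D. \<Sum>d'\<in>D.
            cis (2*pi*real_of_int (d - d')*\<xi>/real_of_int p) *
            cis (2*pi*real_of_int (d - d')*real_of_int l/real_of_int p))"
          proof (intro sum.cong refl)
            fix d d' :: int
            show "cis (2 * pi * (1 / real_of_int p) * real_of_int d * (\<xi> + real_of_int l)) *
             cnj (cis (2 * pi * (1 / real_of_int p) * real_of_int d' * (\<xi> + real_of_int l))) =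
              cis (2*pi*real_of_int (d - d')*\<xi>/real_of_int p) *
            cis (2*pi*real_of_int (d - d')*real_of_int l/real_of_int p)"
              unfolding cis_cnj cis_mult
              by (rule arg_cong[where f=cis]) (use p0 in \<open>simp add: field_simps\<close>)
          qed
          finally show ?thesis .
        qed
        have tot: "(\<Sum>l\<in>{0..p-1}. A l * cnj (A l)) = of_int p * of_nat N"
        proof -
          have "(\<Sum>l\<in>{0..p-1}. A l * cnj (A l)) = (\<Sum>d\<in>D. \<Sum>d'\<in>D.
              cis (2*pi*real_of_int (d - d')*\<xi>/real_of_int p) *
              (\<Sum>l\<in>{0..p-1}. cis (2*pi*real_of_int (d - d')*real_of_int l/real_of_int p)))"
            unfolding prod sum_distrib_left
            by (subst sum.swap, rule sum.cong, rule refl, subst sum.swap, rule refl)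
          also have "\<dots> = (\<Sum>d\<in>D. \<Sum>d'\<in>D. (if d' = d then of_int p else 0))"
          proof (intro sum.cong refl)
            fix d d' assume dd: "d \<in> D" "d' \<in> D"
            have "p dvd (d - d') \<longleftrightarrow> d' = d"
              using hd_res[OF H dd] N0 N_def by auto
            then show "cis (2*pi*real_of_int (d - d')*\<xi>/real_of_int p) *
              (\<Sum>l\<in>{0..p-1}. cis (2*pi*real_of_int (d - d')*real_of_int l/real_of_int p))
              = (if d' = d then of_int p else 0)"
              using root_sum[OF p0, of "d - d'"] by auto
          qed
          also have "\<dots> = of_int p * of_nat N" using finD by (simp add: N_def)
          finally show ?thesis .
        qed
        have totr: "(\<Sum>l\<in>{0..p-1}. (norm (A l))^2) = real_of_int p * real N"
        proof -
          have "complex_of_real (\<Sum>l\<in>{0..p-1}. (norm (A l))^2) = (\<Sum>l\<in>{0..p-1}. A l * cnj (A l))"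
            by (simp only: of_real_sum complex_norm_square)
          also have "\<dots> = complex_of_real (real_of_int p * real N)" using tot by simp
          finally show ?thesis using of_real_eq_iff by blast
        qed
        have bnd: "norm (A l) \<le> real N" for l
        proof -
          have "norm (A l) \<le> (\<Sum>d\<in>D. norm (cis (2 * pi * (1 / real_of_int p) * real_of_int d * (\<xi> + real_of_int l))))"
            unfolding A_def by (rule norm_sum)
          then show ?thesis by (simp add: N_def)
        qed
        show "\<xi> \<in> T_set p D"
        proof (rule ccontr)
          assume nT: "\<xi> \<notin> T_set p D"
          have uniq: "A l2 = 0" if u: "l1 \<in> {0..p-1}" "l2 \<in> {0..p-1}" "l1 \<noteq> l2" "A l1 \<noteq> 0" for l1 l2
          proof (rule ccontr)
            assume a2: "A l2 \<noteq> 0"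
            have "\<xi> \<in> T_set p D" unfolding T_set_def
              apply (rule CollectI, rule conjI, rule xi, rule exI[of _ l1], rule exI[of _ l2])
              using u a2 dA0 by simp
            then show False using nT by simp
          qed
          have "\<exists>l0\<in>{0..p-1}. A l0 \<noteq> 0"
          proof (rule ccontr)
            assume "\<not> (\<exists>l0\<in>{0..p-1}. A l0 \<noteq> 0)"
            then have "(\<Sum>l\<in>{0..p-1}. (norm (A l))^2) = 0" by simp
            then show False using totr p0 N0 by simp
          qed
          then obtain l0 where l0: "l0 \<in> {0..p-1}" "A l0 \<noteq> 0" by blast
          have "(\<Sum>l\<in>{0..p-1}. (norm (A l))^2) = (\<Sum>l\<in>{0..p-1}. if l = l0 then (norm (A l0))^2 else 0)"
          proof (rule sum.cong[OF refl])
            fix l assume lr: "l \<in> {0..p-1}"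
            show "(norm (A l))^2 = (if l = l0 then (norm (A l0))^2 else 0)"
            proof (cases "l = l0")
              case False
              then have "A l = 0" using uniq[OF l0(1) lr _ l0(2)] by metis
              then show ?thesis using False by simp
            qed simp
          qed
          also have "\<dots> = (norm (A l0))^2" using l0 by simp
          also have "\<dots> \<le> (real N)^2" using bnd[of l0] by (simp add: power_mono)
          finally have "real_of_int p * real N \<le> real N * real N" using totr by (simp add: power2_eq_square)
          then have "real_of_int p \<le> real N" using N0 by simp
          then show False using pN N_def by linarith
        qed
      qed
    qed
  qed
qed

end
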